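(* Let $\mathfrak A$ be a unital C$^*$-algebra with trivial centre and $\rho,\bar\rho$ conjugate endomorphisms of $\mathfrak A$, i.e. there are $R\in(\iota,\bar\rho\rho)$, $\bar R\in(\iota,\rho\bar\rho)$ with $R^*\bar\rho(\bar R)=1$ and $\bar R^*\rho(R)=1$. Then $\lambda=\rho\bar\rho$ is a canonical endomorphism of $\mathfrak A$ with respect to the subalgebra $\rho(\mathfrak A)$.
   Context: $(\rho,\sigma)=\{T\in\mathfrak A:T\rho(a)=\sigma(a)T\ \forall a\in\mathfrak A\}$. For a unital C$^*$-subalgebra $\mathfrak B\subset\mathfrak A$, an endomorphism $\lambda$ of $\mathfrak A$ with $\lambda(\mathfrak A)\subset\mathfrak B$ is canonical with respect to $\mathfrak B$ if there are $T\in(\iota,\lambda)$ (in $\mathfrak A$) and $S\in\mathfrak B$ with $Sb=\lambda(b)S$ for all $b\in\mathfrak B$, such that $S^*\lambda(T)\in\mathbb C\setminus\{0\}$ and $T^*S\in\mathbb C\setminus\{0\}$. *)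

theory Defs
  imports Complex_Main
begin

class cstar_algebra = banach + real_normed_algebra_1 +
  fixes adj :: "'a \<Rightarrow> 'a"
    and scaleC :: "complex \<Rightarrow> 'a \<Rightarrow> 'a"
  assumes scaleC_of_real: "scaleC (complex_of_real r) x = scaleR r x"
    and scaleC_add_right: "scaleC c (x + y) = scaleC c x + scaleC c y"
    and scaleC_add_left: "scaleC (c + d) x = scaleC c x + scaleC d x"
    and scaleC_scaleC: "scaleC c (scaleC d x) = scaleC (c * d) x"
    and scaleC_one: "scaleC 1 x = x"
    and norm_scaleC: "norm (scaleC c x) = cmod c * norm x"
    and scaleC_mult_left: "scaleC c x * y = scaleC c (x * y)"
    and scaleC_mult_right: "x * scaleC c y = scaleC c (x * y)"
    and adj_adj: "adj (adj x) = x"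
    and adj_add: "adj (x + y) = adj x + adj y"
    and adj_scaleC: "adj (scaleC c x) = scaleC (cnj c) (adj x)"
    and adj_mult: "adj (x * y) = adj y * adj x"
    and cstar_identity: "norm (adj x * x) = (norm x)\<^sup>2"

definition endo :: "('a::cstar_algebra \<Rightarrow> 'a) \<Rightarrow> bool" where
  "endo \<rho> \<longleftrightarrow>
     (\<forall>x y. \<rho> (x + y) = \<rho> x + \<rho> y) \<and>
     (\<forall>c x. \<rho> (scaleC c x) = scaleC c (\<rho> x)) \<and>
     (\<forall>x y. \<rho> (x * y) = \<rho> x * \<rho> y) \<and>
     \<rho> 1 = 1 \<and>
     (\<forall>x. \<rho> (adj x) = adj (\<rho> x))"

definition intw :: "('a::cstar_algebra \<Rightarrow> 'a) \<Rightarrow> ('a \<Rightarrow> 'a) \<Rightarrow> 'a set" where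
  "intw \<rho> \<sigma> = {T. \<forall>a. T * \<rho> a = \<sigma> a * T}"

definition trivial_centre :: "'a::cstar_algebra itself \<Rightarrow> bool" where
  "trivial_centre _ \<longleftrightarrow> (\<forall>z::'a. (\<forall>a. z * a = a * z) \<longrightarrow> (\<exists>c. z = scaleC c 1))"

definition canonical_wrt :: "('a::cstar_algebra \<Rightarrow> 'a) \<Rightarrow> 'a set \<Rightarrow> bool" where
  "canonical_wrt lam B \<longleftrightarrow>
     endo lam \<and> range lam \<subseteq> B \<and>
     (\<exists>T S. T \<in> intw id lam \<and> S \<in> B \<and> (\<forall>b\<in>B. S * b = lam b * S) \<and>
        (\<exists>c. c \<noteq> 0 \<and> adj S * lam T = scaleC c 1) \<and>
        (\<exists>c. c \<noteq> 0 \<and> adj T * S = scaleC c 1))"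

end

theory Submission
  imports Defs
begin

lemma endo_comp:
  assumes "endo f" "endo g" shows "endo (f \<circ> g)"
  using assms unfolding endo_def by simp

theorem propositionA3:
  fixes \<rho> \<rho>b :: "'a::cstar_algebra \<Rightarrow> 'a" and R Rb :: 'a
  assumes "trivial_centre TYPE('a)"
    and "endo \<rho>" and "endo \<rho>b"
    and "R \<in> intw id (\<rho>b \<circ> \<rho>)" and "Rb \<in> intw id (\<rho> \<circ> \<rho>b)"
    and "adj R * \<rho>b Rb = 1" and "adj Rb * \<rho> R = 1"
  shows "canonical_wrt (\<rho> \<circ> \<rho>b) (range \<rho>)"
proof -
  have e: "endo (\<rho> \<circ> \<rho>b)" using endo_comp assms(2,3) .
  have m: "\<And>x y. \<rho> (x * y) = \<rho> x * \<rho> y" and o: "\<rho> 1 = 1"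
    and ad: "\<And>x. \<rho> (adj x) = adj (\<rho> x)"
    using assms(2) unfolding endo_def by auto
  have Rint: "\<And>a. R * a = \<rho>b (\<rho> a) * R" using assms(4) unfolding intw_def by simp
  have S: "\<forall>b\<in>range \<rho>. \<rho> R * b = (\<rho> \<circ> \<rho>b) b * \<rho> R"
  proof
    fix b assume "b \<in> range \<rho>"
    then obtain a where b: "b = \<rho> a" by auto
    have "\<rho> R * b = \<rho> (R * a)" using b m by simp
    also have "\<dots> = \<rho> (\<rho>b (\<rho> a) * R)" using Rint by simp
    also have "\<dots> = (\<rho> \<circ> \<rho>b) b * \<rho> R" using b m by simp
    finally show "\<rho> R * b = (\<rho> \<circ> \<rho>b) b * \<rho> R" .
  qed
  have c1: "adj (\<rho> R) * (\<rho> \<circ> \<rho>b) Rb = scaleC 1 1"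
    using assms(6) m o ad by (metis comp_apply scaleC_one)
  have c2: "adj Rb * \<rho> R = scaleC 1 1" using assms(7) by (simp add: scaleC_one)
  have "\<exists>T S. T \<in> intw id (\<rho> \<circ> \<rho>b) \<and> S \<in> range \<rho> \<and>
        (\<forall>b\<in>range \<rho>. S * b = (\<rho> \<circ> \<rho>b) b * S) \<and>
        (\<exists>c. c \<noteq> 0 \<and> adj S * (\<rho> \<circ> \<rho>b) T = scaleC c 1) \<and>
        (\<exists>c. c \<noteq> 0 \<and> adj T * S = scaleC c 1)"
    apply (rule exI[of _ Rb], rule exI[of _ "\<rho> R"])
    using S c1 c2 assms(5) by (auto intro!: exI[where x="1::complex"])
  then show ?thesis unfolding canonical_wrt_def using e by auto
qed

end
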